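(* For every $n\ge3$, the function $g_n(x_1,\ldots,x_n)=x_1x_2\vee x_1x_3\vee\cdots\vee x_1x_n\vee x_2x_3\cdots x_n$ is a positive threshold function depending on all its variables, it is not linear read-once, and its specification number in $\mathcal{H}_n$ is $\sigma_{\mathcal{H}_n}(g_n)=2n$.
   Context: $f$ on $\{0,1\}^n$ is positive if $f(\mathbf{x})=1$ and $\mathbf{x}\le\mathbf{y}$ coordinatewise imply $f(\mathbf{y})=1$. $f$ is a threshold function if there are $w_1,\ldots,w_n,t\in\mathbb{R}$ with $f(\mathbf{x})=0\iff\sum_i w_ix_i\le t$. $\mathcal{H}_n$ is the class of threshold functions of $n$ variables. A set $S\subseteq\{0,1\}^n$ specifies $f\in\mathcal{H}_n$ if $f$ is the only function in $\mathcal{H}_n$ agreeing with $f$ on $S$; $\sigma_{\mathcal{H}_n}(f)$ is the minimum size of such a set. Linear read-once (lro): constant or representable by a nested formula (literals are nested; $x\vee t$, $x\wedge t$, $\overline{x}\vee t$, $\overline{x}\wedge t$ are nested when $t$ is nested and contains neither $x$ nor $\overline{x}$). *)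

theory Defs
  imports Main "HOL-Library.Extended_Real"
begin

text \<open>Points of the cube {0,1}^n are Boolean lists of length n; variable x_(i+1)
  of the paper is the list entry at index i. A Boolean function of n variables
  is any f :: bool list => bool, only its values on the cube matter.\<close>

definition cube :: "nat \<Rightarrow> bool list set" where
  "cube n = {x. length x = n}"

definition positive_fn :: "nat \<Rightarrow> (bool list \<Rightarrow> bool) \<Rightarrow> bool" where
  "positive_fn n f \<longleftrightarrow>
     (\<forall>x\<in>cube n. \<forall>y\<in>cube n. f x \<and> (\<forall>i<n. x ! i \<longrightarrow> y ! i) \<longrightarrow> f y)"

definition threshold_fn :: "nat \<Rightarrow> (bool list \<Rightarrow> bool) \<Rightarrow> bool" where
  "threshold_fn n f \<longleftrightarrow>
     (\<exists>(w :: nat \<Rightarrow> real) (t :: real). \<forall>x\<in>cube n.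
        (\<not> f x \<longleftrightarrow> (\<Sum>i<n. w i * (if x ! i then 1 else 0)) \<le> t))"

definition H :: "nat \<Rightarrow> (bool list \<Rightarrow> bool) set" where
  "H n = {f. threshold_fn n f}"

definition specifies :: "nat \<Rightarrow> bool list set \<Rightarrow> (bool list \<Rightarrow> bool) \<Rightarrow> bool" where
  "specifies n S f \<longleftrightarrow> S \<subseteq> cube n \<and> f \<in> H n \<and>
     (\<forall>g\<in>H n. (\<forall>x\<in>S. g x = f x) \<longrightarrow> (\<forall>x\<in>cube n. g x = f x))"

definition spec_number :: "nat \<Rightarrow> (bool list \<Rightarrow> bool) \<Rightarrow> nat" where
  "spec_number n f = (LEAST k. \<exists>S. specifies n S f \<and> card S = k)"

definition depends_on_all :: "nat \<Rightarrow> (bool list \<Rightarrow> bool) \<Rightarrow> bool" where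
  "depends_on_all n f \<longleftrightarrow>
     (\<forall>i<n. \<exists>x\<in>cube n. f x \<noteq> f (x[i := \<not> x ! i]))"

text \<open>Nested formulas. A literal is (i, b): variable i if b, its negation if not b.
  NOr i b t = (literal) \<or> t, NAnd i b t = (literal) \<and> t.\<close>
datatype nformula = NLit nat bool | NOr nat bool nformula | NAnd nat bool nformula

fun nvars :: "nformula \<Rightarrow> nat set" where
  "nvars (NLit i b) = {i}"
| "nvars (NOr i b t) = insert i (nvars t)"
| "nvars (NAnd i b t) = insert i (nvars t)"

fun nested :: "nformula \<Rightarrow> bool" where
  "nested (NLit i b) = True"
| "nested (NOr i b t) = (nested t \<and> i \<notin> nvars t)"
| "nested (NAnd i b t) = (nested t \<and> i \<notin> nvars t)"

fun neval :: "nformula \<Rightarrow> bool list \<Rightarrow> bool" where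
  "neval (NLit i b) x = (x ! i = b)"
| "neval (NOr i b t) x = ((x ! i = b) \<or> neval t x)"
| "neval (NAnd i b t) x = ((x ! i = b) \<and> neval t x)"

definition lro :: "nat \<Rightarrow> (bool list \<Rightarrow> bool) \<Rightarrow> bool" where
  "lro n f \<longleftrightarrow>
     (\<exists>c. \<forall>x\<in>cube n. f x = c) \<or>
     (\<exists>\<phi>. nested \<phi> \<and> nvars \<phi> \<subseteq> {..<n} \<and> (\<forall>x\<in>cube n. f x = neval \<phi> x))"

definition g :: "nat \<Rightarrow> bool list \<Rightarrow> bool" where
  "g n x \<longleftrightarrow> (\<exists>j\<in>{1..<n}. x ! 0 \<and> x ! j) \<or> (\<forall>j\<in>{1..<n}. x ! j)"

end

theory Submission
  imports Defs
begin

definition R :: "nat \<Rightarrow> nat \<Rightarrow> nat set" where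
  "R n j = {k. 1 \<le> k \<and> k < n \<and> k \<noteq> j}"
definition cnt :: "nat \<Rightarrow> nat \<Rightarrow> bool list \<Rightarrow> nat" where
  "cnt n j x = card {k \<in> R n j. x ! k}"

lemma R_eq: "R n j = {1..<n} - {j}" unfolding R_def by auto
lemma R_fin[simp]: "finite (R n j)" unfolding R_eq by simp
lemma card_R: "1 \<le> j \<Longrightarrow> j < n \<Longrightarrow> card (R n j) = n - 2"
  unfolding R_eq by (simp add: card_Diff_singleton)
lemma cnt_le: "1 \<le> j \<Longrightarrow> j < n \<Longrightarrow> cnt n j x \<le> n - 2"
  unfolding cnt_def by (metis (no_types, lifting) R_fin card_R card_mono mem_Collect_eq subsetI)
lemma cnt0: "cnt n j x = 0 \<longleftrightarrow> (\<forall>k\<in>R n j. \<not> x ! k)"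
  unfolding cnt_def by auto
lemma cnt1: "1 \<le> cnt n j x \<longleftrightarrow> (\<exists>k\<in>R n j. x ! k)"
  unfolding cnt_def by (auto simp: Suc_le_eq card_gt_0_iff)
lemma cntfull: "1 \<le> j \<Longrightarrow> j < n \<Longrightarrow> cnt n j x = n - 2 \<longleftrightarrow> (\<forall>k\<in>R n j. x ! k)"
proof
  assume a: "1 \<le> j" "j < n" "cnt n j x = n - 2"
  have "{k \<in> R n j. x ! k} = R n j"
    by (rule card_subset_eq) (use a in \<open>auto simp: cnt_def card_R\<close>)
  then show "\<forall>k\<in>R n j. x ! k" by blast
next
  assume a: "1 \<le> j" "j < n" "\<forall>k\<in>R n j. x ! k"
  then have "{k \<in> R n j. x ! k} = R n j" by blast
  then show "cnt n j x = n - 2" using a by (simp add: cnt_def card_R)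
qed

definition GG :: "nat \<Rightarrow> bool \<Rightarrow> bool \<Rightarrow> nat \<Rightarrow> bool" where
  "GG n p q m \<longleftrightarrow> (p \<and> (q \<or> 1 \<le> m)) \<or> (q \<and> m = n - 2)"

lemma gchar: "x \<in> cube n \<Longrightarrow> 1 \<le> j \<Longrightarrow> j < n \<Longrightarrow>
   g n x \<longleftrightarrow> GG n (x!0) (x!j) (cnt n j x)"
proof -
  assume a: "1 \<le> j" "j < n"
  have s: "{1..<n} = insert j (R n j)" using a unfolding R_eq by auto
  show ?thesis unfolding g_def GG_def s cnt1 cntfull[OF a] by auto
qed

lemma msplit: "(m::nat) \<le> n - 2 \<Longrightarrow> 3 \<le> n \<Longrightarrow> m = 0 \<or> m = n - 2 \<or> (1 \<le> real m \<and> real m \<le> real n - 3)"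
  by auto

lemma A0: "3 \<le> n \<Longrightarrow> m \<le> n - 2 \<Longrightarrow>
  GG n p q m \<longleftrightarrow> (real n - 2) * (if p then 1 else 0) + 1 * (if q then 1 else 0) + real m > real n - 2"
  using msplit[of m n] unfolding GG_def by (cases p; cases q; auto)

lemma A1: "3 \<le> n \<Longrightarrow> m \<le> n - 2 \<Longrightarrow>
  (if p \<and> q \<and> m = 0 then \<not> GG n p q m else GG n p q m) \<longleftrightarrow>
  (real n - 5/2) * (if p then 1 else 0) + (1/2) * (if q then 1 else 0) + real m > real n - 2"
  using msplit[of m n] unfolding GG_def by (cases p; cases q; auto)

lemma A2: "3 \<le> n \<Longrightarrow> m \<le> n - 2 \<Longrightarrow>
  (if \<not> p \<and> q \<and> m = n - 2 then \<not> GG n p q m else GG n p q m) \<longleftrightarrow>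
  (real n - 1) * (if p then 1 else 0) + 1 * (if q then 1 else 0) + real m > real n - 1"
  using msplit[of m n] unfolding GG_def by (cases p; cases q; auto)

lemma A3: "3 \<le> n \<Longrightarrow> m \<le> n - 2 \<Longrightarrow>
  (if p \<and> \<not> q \<and> m = 0 then \<not> GG n p q m else GG n p q m) \<longleftrightarrow>
  (real n - 1) * (if p then 1 else 0) + 1 * (if q then 1 else 0) + real m > real n - 2"
  using msplit[of m n] unfolding GG_def by (cases p; cases q; auto)

lemma A4: "3 \<le> n \<Longrightarrow> m \<le> n - 2 \<Longrightarrow>
  (if \<not> p \<and> \<not> q \<and> m = n - 2 then \<not> GG n p q m else GG n p q m) \<longleftrightarrow>
  (real n - 5/2) * (if p then 1 else 0) + (1/2) * (if q then 1 else 0) + real m > real n - 5/2"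
  using msplit[of m n] unfolding GG_def by (cases p; cases q; auto)


lemma sum_set: "(\<Sum>i<n. (w::nat\<Rightarrow>real) i * (if x ! i then 1 else 0)) = sum w {i. i < n \<and> x ! i}"
proof -
  have "(\<Sum>i<n. w i * (if x ! i then 1 else 0)) = (\<Sum>i\<in>{..<n}. if x ! i then w i else 0)"
    by (rule sum.cong) auto
  also have "\<dots> = sum w ({..<n} \<inter> {i. x ! i})" by (simp add: sum.inter_restrict)
  also have "{..<n} \<inter> {i. x ! i} = {i. i < n \<and> x ! i}" by auto
  finally show ?thesis .
qed

lemma wsum: assumes "1 \<le> j" "j < n"
  shows "(\<Sum>i<n. (if i = 0 then a else if i = j then c else 1) * (if x ! i then 1 else 0))
     = a * (if x!0 then 1 else 0) + c * (if x!j then 1 else 0) + real (cnt n j x)"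
proof -
  have s: "{..<n} = insert 0 (insert j (R n j))" using assms unfolding R_def by auto
  have r: "(\<Sum>i\<in>R n j. (if i = 0 then a else if i = j then c else 1) * (if x ! i then 1 else 0))
        = (\<Sum>i\<in>R n j. (if x ! i then 1 else 0::real))"
    by (rule sum.cong) (auto simp: R_def)
  have r2: "(\<Sum>i\<in>R n j. (if x ! i then 1 else 0::real)) = real (cnt n j x)"
    unfolding cnt_def by (simp add: sum.If_cases[of "R n j"] Int_def conj_commute)
  have n: "0 \<notin> R n j" "j \<notin> R n j" "j \<noteq> 0" "0 \<noteq> j" using assms by (auto simp: R_def)
  show ?thesis unfolding s using assms n
    by (simp add: r r2)
qed

lemma thr: assumes "1 \<le> j" "j < n"
  and "\<forall>x\<in>cube n. f x \<longleftrightarrow> a * (if x!0 then 1 else 0) + c * (if x!j then 1 else 0) + real (cnt n j x) > t"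
shows "threshold_fn n f"
  unfolding threshold_fn_def
  apply (rule exI[of _ "\<lambda>i. if i = 0 then a else if i = j then c else 1"])
  apply (rule exI[of _ t])
  using assms by (simp add: wsum not_less)

lemma eq_char: assumes "x \<in> cube n" "y \<in> cube n" "1 \<le> j" "j < n"
  shows "x = y \<longleftrightarrow> x!0 = y!0 \<and> x!j = y!j \<and> (\<forall>k\<in>R n j. x!k = y!k)"
proof
  assume "x!0 = y!0 \<and> x!j = y!j \<and> (\<forall>k\<in>R n j. x!k = y!k)"
  moreover have "i = 0 \<or> i = j \<or> i \<in> R n j" if "i < n" for i using that unfolding R_def by auto
  ultimately have "\<forall>i<n. x!i = y!i" by blast
  then show "x = y" using assms(1,2) unfolding cube_def by (simp add: list_eq_iff_nth_eq)
qed auto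

definition pT :: "nat \<Rightarrow> nat \<Rightarrow> bool list" where "pT n j = (replicate n False)[0:=True, j:=True]"
definition pF :: "nat \<Rightarrow> nat \<Rightarrow> bool list" where "pF n j = (replicate n True)[0:=False, j:=False]"
definition pT0 :: "nat \<Rightarrow> bool list" where "pT0 n = (replicate n True)[0:=False]"
definition pF1 :: "nat \<Rightarrow> bool list" where "pF1 n = (replicate n False)[0:=True]"

lemma cube_pts[simp]: "pT n j \<in> cube n" "pF n j \<in> cube n" "pT0 n \<in> cube n" "pF1 n \<in> cube n"
  by (auto simp: cube_def pT_def pF_def pT0_def pF1_def)

lemma nth_pts: "i < n \<Longrightarrow> j < n \<Longrightarrow> pT n j ! i = (i = 0 \<or> i = j)"
  "i < n \<Longrightarrow> j < n \<Longrightarrow> pF n j ! i = (i \<noteq> 0 \<and> i \<noteq> j)"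
  "i < n \<Longrightarrow> pT0 n ! i = (i \<noteq> 0)"
  "i < n \<Longrightarrow> pF1 n ! i = (i = 0)"
  by (auto simp: pT_def pF_def pT0_def pF1_def nth_list_update)

lemma isT: "x \<in> cube n \<Longrightarrow> 1 \<le> j \<Longrightarrow> j < n \<Longrightarrow> x = pT n j \<longleftrightarrow> x!0 \<and> x!j \<and> cnt n j x = 0"
  by (subst eq_char[of x n "pT n j" j]) (auto simp: nth_pts cnt0 R_def)
lemma isF: "x \<in> cube n \<Longrightarrow> 1 \<le> j \<Longrightarrow> j < n \<Longrightarrow> x = pF n j \<longleftrightarrow> \<not> x!0 \<and> \<not> x!j \<and> cnt n j x = n - 2"
  by (subst eq_char[of x n "pF n j" j]) (auto simp: nth_pts cntfull R_def)
lemma isT0: "x \<in> cube n \<Longrightarrow> 2 \<le> n \<Longrightarrow> x = pT0 n \<longleftrightarrow> \<not> x!0 \<and> x!1 \<and> cnt n 1 x = n - 2"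
  by (subst eq_char[of x n "pT0 n" 1]) (auto simp: nth_pts cntfull R_def)
lemma isF1: "x \<in> cube n \<Longrightarrow> 2 \<le> n \<Longrightarrow> x = pF1 n \<longleftrightarrow> x!0 \<and> \<not> x!1 \<and> cnt n 1 x = 0"
  by (subst eq_char[of x n "pF1 n" 1]) (auto simp: nth_pts cnt0 R_def)


lemma flip_in: assumes "p \<in> cube n" "threshold_fn n (\<lambda>x. if x = p then \<not> g n x else g n x)"
  "specifies n S (g n)" shows "p \<in> S"
proof (rule ccontr)
  assume nS: "p \<notin> S"
  define h where "h = (\<lambda>x. if x = p then \<not> g n x else g n x)"
  have hH: "h \<in> H n" using assms(2) by (simp add: H_def h_def)
  have ag: "\<forall>x\<in>S. h x = g n x" unfolding h_def using nS by auto
  have sp: "\<forall>g'\<in>H n. (\<forall>x\<in>S. g' x = g n x) \<longrightarrow> (\<forall>x\<in>cube n. g' x = g n x)"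
    using assms(3) unfolding specifies_def by (elim conjE)
  have "\<forall>x\<in>cube n. h x = g n x" using mp[OF bspec[OF sp hH] ag] .
  then have "h p = g n p" using assms(1) by (elim ballE) auto
  then show False unfolding h_def by simp
qed

lemma gH: assumes "3 \<le> n"
  shows "threshold_fn n (g n)"
proof -
  have a: "1 \<le> (1::nat)" "1 < n" "2 \<le> n" using assms by auto
  have "\<forall>x\<in>cube n. g n x \<longleftrightarrow> (real n - 2) * (if x!0 then 1 else 0) + 1 * (if x!1 then 1 else 0) + real (cnt n 1 x) > real n - 2"
  proof
    fix x assume x: "x \<in> cube n"
    show "g n x \<longleftrightarrow> (real n - 2) * (if x!0 then 1 else 0) + 1 * (if x!1 then 1 else 0) + real (cnt n 1 x) > real n - 2"
      using assms by (simp only: gchar[OF x a(1,2)]) (rule A0, auto intro: cnt_le)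
  qed
  then show ?thesis by (rule thr[OF a(1,2)])
qed

lemma flipT: assumes "3 \<le> n" "1 \<le> j" "j < n"
  shows "threshold_fn n (\<lambda>x. if x = pT n j then \<not> g n x else g n x)"
proof -
  have a: "1 \<le> j" "j < n" "2 \<le> n" using assms by auto
  have "\<forall>x\<in>cube n. (if x = pT n j then \<not> g n x else g n x) \<longleftrightarrow> (real n - 5/2) * (if x!0 then 1 else 0) + (1/2) * (if x!j then 1 else 0) + real (cnt n j x) > real n - 2"
  proof
    fix x assume x: "x \<in> cube n"
    show "(if x = pT n j then \<not> g n x else g n x) \<longleftrightarrow> (real n - 5/2) * (if x!0 then 1 else 0) + (1/2) * (if x!j then 1 else 0) + real (cnt n j x) > real n - 2"
      using assms by (simp only: gchar[OF x a(1,2)] isT[OF x a(1,2)]) (rule A1, auto intro: cnt_le)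
  qed
  then show ?thesis by (rule thr[OF a(1,2)])
qed

lemma flipF: assumes "3 \<le> n" "1 \<le> j" "j < n"
  shows "threshold_fn n (\<lambda>x. if x = pF n j then \<not> g n x else g n x)"
proof -
  have a: "1 \<le> j" "j < n" "2 \<le> n" using assms by auto
  have "\<forall>x\<in>cube n. (if x = pF n j then \<not> g n x else g n x) \<longleftrightarrow> (real n - 5/2) * (if x!0 then 1 else 0) + (1/2) * (if x!j then 1 else 0) + real (cnt n j x) > real n - 5/2"
  proof
    fix x assume x: "x \<in> cube n"
    show "(if x = pF n j then \<not> g n x else g n x) \<longleftrightarrow> (real n - 5/2) * (if x!0 then 1 else 0) + (1/2) * (if x!j then 1 else 0) + real (cnt n j x) > real n - 5/2"
      using assms by (simp only: gchar[OF x a(1,2)] isF[OF x a(1,2)]) (rule A4, auto intro: cnt_le)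
  qed
  then show ?thesis by (rule thr[OF a(1,2)])
qed

lemma flipT0: assumes "3 \<le> n"
  shows "threshold_fn n (\<lambda>x. if x = pT0 n then \<not> g n x else g n x)"
proof -
  have a: "1 \<le> (1::nat)" "1 < n" "2 \<le> n" using assms by auto
  have "\<forall>x\<in>cube n. (if x = pT0 n then \<not> g n x else g n x) \<longleftrightarrow> (real n - 1) * (if x!0 then 1 else 0) + 1 * (if x!1 then 1 else 0) + real (cnt n 1 x) > real n - 1"
  proof
    fix x assume x: "x \<in> cube n"
    show "(if x = pT0 n then \<not> g n x else g n x) \<longleftrightarrow> (real n - 1) * (if x!0 then 1 else 0) + 1 * (if x!1 then 1 else 0) + real (cnt n 1 x) > real n - 1"
      using assms by (simp only: gchar[OF x a(1,2)] isT0[OF x a(3)]) (rule A2, auto intro: cnt_le)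
  qed
  then show ?thesis by (rule thr[OF a(1,2)])
qed

lemma flipF1: assumes "3 \<le> n"
  shows "threshold_fn n (\<lambda>x. if x = pF1 n then \<not> g n x else g n x)"
proof -
  have a: "1 \<le> (1::nat)" "1 < n" "2 \<le> n" using assms by auto
  have "\<forall>x\<in>cube n. (if x = pF1 n then \<not> g n x else g n x) \<longleftrightarrow> (real n - 1) * (if x!0 then 1 else 0) + 1 * (if x!1 then 1 else 0) + real (cnt n 1 x) > real n - 2"
  proof
    fix x assume x: "x \<in> cube n"
    show "(if x = pF1 n then \<not> g n x else g n x) \<longleftrightarrow> (real n - 1) * (if x!0 then 1 else 0) + 1 * (if x!1 then 1 else 0) + real (cnt n 1 x) > real n - 2"
      using assms by (simp only: gchar[OF x a(1,2)] isF1[OF x a(3)]) (rule A3, auto intro: cnt_le)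
  qed
  then show ?thesis by (rule thr[OF a(1,2)])
qed

lemma len_pts[simp]: "length (pT n j) = n" "length (pF n j) = n" "length (pT0 n) = n" "length (pF1 n) = n"
  by (simp_all add: pT_def pF_def pT0_def pF1_def)

lemma nu: "i < n \<Longrightarrow> j < n \<Longrightarrow> (replicate n b)[i:=c] ! j = (if j = i then c else b)"
  by (simp add: nth_list_update)

definition TS :: "nat \<Rightarrow> bool list \<Rightarrow> nat set" where "TS n x = {i. i < n \<and> x ! i}"

lemma TS_pts: "j < n \<Longrightarrow> TS n (pT n j) = {0, j}"
  "j < n \<Longrightarrow> TS n (pF n j) = {1..<n} - {j}"
  "TS n (pT0 n) = {1..<n}"
  "0 < n \<Longrightarrow> TS n (pF1 n) = {0}"
  by (auto simp: TS_def nth_pts)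

lemma g_pts: assumes "3 \<le> n" "1 \<le> j" "j < n"
  shows "g n (pT n j)" "\<not> g n (pF n j)" "g n (pT0 n)" "\<not> g n (pF1 n)"
proof -
  show "g n (pT n j)" unfolding g_def using assms by (auto simp: nth_pts)
  show "\<not> g n (pF n j)" unfolding g_def using assms by (auto simp: nth_pts)
  show "g n (pT0 n)" unfolding g_def using assms by (auto simp: nth_pts)
  have "\<not> pF1 n ! 1" using assms by (simp add: nth_pts)
  then show "\<not> g n (pF1 n)" unfolding g_def using assms by (auto simp: nth_pts)
qed

definition E :: "nat \<Rightarrow> bool list set" where
  "E n = pT n ` {1..<n} \<union> pF n ` {1..<n} \<union> {pT0 n, pF1 n}"

lemma E_sub: "E n \<subseteq> cube n" unfolding E_def by auto

lemma E_spec: assumes n3: "3 \<le> n" shows "specifies n (E n) (g n)"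
  unfolding specifies_def
proof (intro conjI ballI impI)
  show "E n \<subseteq> cube n" by (rule E_sub)
  show "g n \<in> H n" using gH[OF n3] by (simp add: H_def)
  fix h x assume hH: "h \<in> H n" and ag: "\<forall>x\<in>E n. h x = g n x" and x: "x \<in> cube n"
  from hH obtain w :: "nat \<Rightarrow> real" and t :: real where wt: "\<forall>x\<in>cube n. (\<not> h x \<longleftrightarrow> (\<Sum>i<n. w i * (if x ! i then 1 else 0)) \<le> t)"
    using hH unfolding H_def threshold_fn_def mem_Collect_eq by blast
  have hx: "h y \<longleftrightarrow> sum w (TS n y) > t" if "y \<in> cube n" for y
    using wt that unfolding TS_def sum_set[symmetric] by (meson not_less)
  have hT: "sum w {0, j} > t" if "1 \<le> j" "j < n" for j
  proof -
    have "pT n j \<in> E n" using that unfolding E_def by auto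
    then have "h (pT n j)" using ag g_pts[OF n3 that] by auto
    then show ?thesis using hx[of "pT n j"] TS_pts(1)[OF that(2)] by simp
  qed
  have hF1: "\<not> w 0 > t"
  proof -
    have "pF1 n \<in> E n" unfolding E_def by auto
    then have "\<not> h (pF1 n)" using ag g_pts[OF n3, of 1] n3 by auto
    then show ?thesis using hx[of "pF1 n"] TS_pts(4) n3 by simp
  qed
  have hT0: "sum w {1..<n} > t"
  proof -
    have "pT0 n \<in> E n" unfolding E_def by auto
    then have "h (pT0 n)" using ag g_pts[OF n3, of 1] n3 by auto
    then show ?thesis using hx[of "pT0 n"] TS_pts(3) by simp
  qed
  have hF: "\<not> sum w ({1..<n} - {k}) > t" if "1 \<le> k" "k < n" for k
  proof -
    have "pF n k \<in> E n" using that unfolding E_def by auto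
    then have "\<not> h (pF n k)" using ag g_pts[OF n3 that] by auto
    then show ?thesis using hx[of "pF n k"] TS_pts(2)[OF that(2)] by simp
  qed
  have wpos: "w j > 0" if "1 \<le> j" "j < n" for j
    using hT[OF that] hF1 that by simp
  have fin: "finite (TS n y)" for y unfolding TS_def by simp
  show "h x = g n x"
  proof (cases "g n x")
    case True
    then consider (a) j where "j \<in> {1..<n}" "x!0" "x!j" | (b) "\<not> x!0" "\<forall>j\<in>{1..<n}. x!j"
      using n3 unfolding g_def by (cases "x!0") (auto, metis One_nat_def atLeastLessThan_iff le_refl less_le_trans numeral_3_eq_3 less_Suc_eq)
    then show ?thesis
    proof cases
      case a
      have "sum w {0, j} \<le> sum w (TS n x)"
        by (rule sum_mono2[OF fin]) (use a x wpos in \<open>auto simp: TS_def cube_def Suc_le_eq intro: less_imp_le\<close>)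
      then show ?thesis using hT[of j] a hx[OF x] True by auto
    next
      case b
      have "TS n x = {1..<n}" using b by (auto simp: TS_def Suc_le_eq) (metis gr0I)
      then show ?thesis using hT0 hx[OF x] True by auto
    qed
  next
    case False
    show ?thesis
    proof (cases "x!0")
      case True
      have "TS n x = {0}" using False True n3 unfolding g_def TS_def by auto
      then show ?thesis using hF1 hx[OF x] False by auto
    next
      case x0: False
      then obtain k where k: "k \<in> {1..<n}" "\<not> x!k" using False unfolding g_def by blast
      have "sum w (TS n x) \<le> sum w ({1..<n} - {k})"
        by (rule sum_mono2) (use k x0 wpos in \<open>auto simp: TS_def Suc_le_eq intro: less_imp_le gr0I\<close>)
      then show ?thesis using hF[of k] k hx[OF x] False by auto
    qed
  qed
qed

lemma fin_cube: "finite (cube n)"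
proof -
  have "cube n = {xs. set xs \<subseteq> (UNIV::bool set) \<and> length xs = n}" unfolding cube_def by auto
  then show ?thesis using finite_lists_length_eq[of "UNIV::bool set" n] by simp
qed

lemma E_card: assumes n3: "3 \<le> n" shows "card (E n) = 2 * n"
proof -
  let ?A = "pT n ` {1..<n}" and ?B = "pF n ` {1..<n}"
  have injA: "inj_on (pT n) {1..<n}"
  proof (rule inj_onI)
    fix a b assume a: "a \<in> {1..<n}" "b \<in> {1..<n}" "pT n a = pT n b"
    have "pT n a ! a" using a(1,2) by (simp add: nth_pts)
    then have "pT n b ! a" using a by simp
    moreover have "pT n b ! a = (a = 0 \<or> a = b)" using nth_pts(1)[of a n b] a by simp
    ultimately show "a = b" using a by simp
  qed
  have injB: "inj_on (pF n) {1..<n}"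
  proof (rule inj_onI)
    fix a b assume a: "a \<in> {1..<n}" "b \<in> {1..<n}" "pF n a = pF n b"
    have "\<not> pF n b ! b" using a(1,2) by (simp add: nth_pts)
    then have "\<not> pF n a ! b" using a by simp
    moreover have "pF n a ! b = (b \<noteq> 0 \<and> b \<noteq> a)" using nth_pts(2)[of b n a] a by simp
    ultimately show "a = b" using a by simp
  qed
  have cA: "card ?A = n - 1" using card_image[OF injA] by simp
  have cB: "card ?B = n - 1" using card_image[OF injB] by simp
  have nA: "pF1 n \<notin> ?A"
  proof
    assume "pF1 n \<in> ?A"
    then obtain j where j: "j \<in> {1..<n}" "pF1 n = pT n j" by auto
    have "pT n j ! j" using j(1) by (simp add: nth_pts)
    moreover have "\<not> pF1 n ! j" using j(1) by (simp add: nth_pts)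
    ultimately show False using j(2) by simp
  qed
  have nB: "pT0 n \<notin> ?B"
  proof
    assume "pT0 n \<in> ?B"
    then obtain j where j: "j \<in> {1..<n}" "pT0 n = pF n j" by auto
    have "\<not> pF n j ! j" using j(1) by (simp add: nth_pts)
    moreover have "pT0 n ! j" using j(1) by (simp add: nth_pts)
    ultimately show False using j(2) by simp
  qed
  have d: "insert (pF1 n) ?A \<inter> insert (pT0 n) ?B = {}"
  proof -
    have "\<forall>y\<in>insert (pF1 n) ?A. y ! 0" using n3 by (auto simp: nth_pts)
    moreover have "\<forall>y\<in>insert (pT0 n) ?B. \<not> y ! 0" using n3 by (auto simp: nth_pts)
    ultimately show ?thesis by blast
  qed
  have "E n = insert (pF1 n) ?A \<union> insert (pT0 n) ?B" unfolding E_def by auto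
  then have "card (E n) = card (insert (pF1 n) ?A) + card (insert (pT0 n) ?B)"
    using card_Un_disjoint[OF _ _ d] by simp
  also have "\<dots> = 2 * n" using cA cB nA nB n3 by simp
  finally show ?thesis .
qed

lemma E_in_S: assumes n3: "3 \<le> n" and sp: "specifies n S (g n)" shows "E n \<subseteq> S"
proof
  fix p assume "p \<in> E n"
  then consider (a) j where "j \<in> {1..<n}" "p = pT n j" | (b) j where "j \<in> {1..<n}" "p = pF n j"
    | (c) "p = pT0 n" | (d) "p = pF1 n" unfolding E_def by blast
  then show "p \<in> S"
  proof cases
    case a then show ?thesis using flip_in[OF _ flipT[OF n3] sp] by simp
  next
    case b then show ?thesis using flip_in[OF _ flipF[OF n3] sp] by simp
  next
    case c then show ?thesis using flip_in[OF _ flipT0[OF n3] sp] by simp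
  next
    case d then show ?thesis using flip_in[OF _ flipF1[OF n3] sp] by simp
  qed
qed

lemma spec_num: assumes n3: "3 \<le> n" shows "spec_number n (g n) = 2 * n"
  unfolding spec_number_def
proof (rule Least_equality)
  show "\<exists>S. specifies n S (g n) \<and> card S = 2 * n" using E_spec[OF n3] E_card[OF n3] by blast
next
  fix k assume "\<exists>S. specifies n S (g n) \<and> card S = k"
  then obtain S where S: "specifies n S (g n)" "card S = k" by blast
  have "finite S" using S(1) fin_cube unfolding specifies_def by (blast intro: finite_subset)
  then show "2 * n \<le> k" using card_mono[OF _ E_in_S[OF n3 S(1)]] S(2) E_card[OF n3] by simp
qed

lemma pos_g: "positive_fn n (g n)"
  unfolding positive_fn_def
proof (intro ballI impI)
  fix x y assume xy: "x \<in> cube n" "y \<in> cube n" "g n x \<and> (\<forall>i<n. x!i \<longrightarrow> y!i)"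
  then have m: "\<And>i. i<n \<Longrightarrow> x!i \<Longrightarrow> y!i" by blast
  from xy have "g n x" by blast
  then show "g n y" unfolding g_def
  proof (elim disjE bexE)
    fix j assume j: "j\<in>{1..<n}" "x!0 \<and> x!j"
    then have "y!0" "y!j" using m by auto
    then show "(\<exists>j\<in>{1..<n}. y!0 \<and> y!j) \<or> (\<forall>j\<in>{1..<n}. y!j)" using j by blast
  next
    assume "\<forall>j\<in>{1..<n}. x!j" then show "(\<exists>j\<in>{1..<n}. y!0 \<and> y!j) \<or> (\<forall>j\<in>{1..<n}. y!j)" using m by auto
  qed
qed

lemma root: "\<exists>i\<in>nvars \<phi>. \<exists>b c. \<forall>x. x ! i = b \<longrightarrow> neval \<phi> x = c"
proof (cases \<phi>)
  case (NLit i b) then show ?thesis by auto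
next
  case (NOr i b t) then show ?thesis by auto
next
  case (NAnd i b t) then show ?thesis by (intro bexI[of _ i] exI[of _ "\<not> b"] exI[of _ False]) auto
qed

lemma g_half: assumes n3: "3 \<le> n" and i: "i < n"
  shows "\<exists>x\<in>cube n. \<exists>y\<in>cube n. x ! i = b \<and> y ! i = b \<and> g n x \<noteq> g n y"
proof -
  define k where "k = (if i = 1 then 2 else (1::nat))"
  have k: "k \<in> {1..<n}" "k \<noteq> i" "k \<noteq> 0" using n3 unfolding k_def by auto
  have g1: "g n (replicate n True)" using k unfolding g_def by auto
  have g2: "\<not> g n (replicate n False)" using k n3 unfolding g_def by auto
  have g3: "\<not> g n ((replicate n False)[i:=True])"
  proof
    assume a: "g n ((replicate n False)[i:=True])"
    have "\<not> (replicate n False)[i:=True] ! k" using k i by (simp add: nu)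
    moreover have "\<forall>j\<in>{1..<n}. (replicate n False)[i:=True] ! 0 \<longrightarrow> \<not> (replicate n False)[i:=True] ! j"
      using i by (auto simp: nu)
    ultimately show False using a k unfolding g_def by blast
  qed
  have g4: "g n ((replicate n True)[i:=False])"
  proof (cases "i = 0")
    case True then show ?thesis unfolding g_def using i by (auto simp: nu)
  next
    case False
    have "(replicate n True)[i:=False] ! 0" "(replicate n True)[i:=False] ! k" using False i k by (auto simp: nu)
    then show ?thesis unfolding g_def using k by blast
  qed
  show ?thesis
  proof (cases b)
    case True
    then show ?thesis using g1 g3 i
      by (intro bexI[of _ "replicate n True"] bexI[of _ "(replicate n False)[i:=True]"]) (auto simp: cube_def)
  next
    case False
    then show ?thesis using g2 g4 i
      by (intro bexI[of _ "replicate n False"] bexI[of _ "(replicate n True)[i:=False]"]) (auto simp: cube_def)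
  qed
qed

lemma not_lro: assumes n3: "3 \<le> n" shows "\<not> lro n (g n)"
proof
  assume "lro n (g n)"
  then consider (c) c where "\<forall>x\<in>cube n. g n x = c"
    | (f) \<phi> where "nvars \<phi> \<subseteq> {..<n}" "\<forall>x\<in>cube n. g n x = neval \<phi> x"
    unfolding lro_def by blast
  then show False
  proof cases
    case c
    have "\<exists>x\<in>cube n. \<exists>y\<in>cube n. x ! 0 = True \<and> y ! 0 = True \<and> g n x \<noteq> g n y"
      using g_half[OF n3, of 0 True] n3 by simp
    then obtain x y where "x \<in> cube n" "y \<in> cube n" "g n x \<noteq> g n y" by blast
    then show False using c by auto
  next
    case f
    obtain i b c where i: "i \<in> nvars \<phi>" and bc: "\<forall>x. x ! i = b \<longrightarrow> neval \<phi> x = c" using root by blast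
    have "i < n" using i f(1) by auto
    then obtain x y where "x \<in> cube n" "y \<in> cube n" "x ! i = b" "y ! i = b" "g n x \<noteq> g n y"
      using g_half[OF n3] by blast
    then show False using f(2) bc by metis
  qed
qed

lemma dep: assumes n3: "3 \<le> n" shows "depends_on_all n (g n)"
  unfolding depends_on_all_def
proof (intro allI impI)
  fix i assume i: "i < n"
  show "\<exists>x\<in>cube n. g n x \<noteq> g n (x[i := \<not> x ! i])"
  proof (cases "i = 0")
    case True
    have a: "1 \<le> (1::nat)" "1 < n" using n3 by auto
    have "\<not> g n ((pT n 1)[0 := False])"
    proof
      assume a2: "g n ((pT n 1)[0 := False])"
      have t: "2 \<in> {1..<n}" using n3 by auto
      have "\<not> (pT n 1)[0 := False] ! 0" "\<not> (pT n 1)[0 := False] ! 2" using n3 by (auto simp: nth_list_update nth_pts)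
      then show False using a2 t unfolding g_def by blast
    qed
    then show ?thesis using True g_pts(1)[OF n3 a] a by (intro bexI[of _ "pT n 1"]) (auto simp: nth_pts)
  next
    case False
    have a: "1 \<le> i" "i < n" using i False by auto
    have "(pT n i)[i := False] = pF1 n"
      by (rule nth_equalityI) (use a in \<open>auto simp: nth_list_update nth_pts\<close>)
    then show ?thesis using g_pts[OF n3 a] a by (intro bexI[of _ "pT n i"]) (auto simp: nth_pts)
  qed
qed

theorem mainTheorem16:
  fixes n :: nat
  assumes "n \<ge> 3"
  shows "positive_fn n (g n) \<and> g n \<in> H n \<and> depends_on_all n (g n)
         \<and> \<not> lro n (g n) \<and> spec_number n (g n) = 2 * n"
  using pos_g gH[OF assms] dep[OF assms] not_lro[OF assms] spec_num[OF assms] by (simp add: H_def)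

end
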